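(* For all real numbers $w,z$ there exists an infinitely differentiable strictly increasing bijection $t:\mathbb{R}\to\mathbb{R}$ such that $t(w)=z$ and $t(x)\sim_F^* x$ for every $x<w$.
   Context: Let $h:\mathbb{R}\to\mathbb{R}$ be $h(x)=0$ for $x\le 0$ and $h(x)=e^{-1/x}$ for $x>0$, and let $s:[0,1]\to[0,1]$ be $s(x)=\frac{h(x)}{h(x)+h(1-x)}$. For points $A=(p_1,q_1)$, $B=(p_2,q_2)$ in $\mathbb{R}^2$ with $p_1<p_2$ and $q_1<q_2$, define $s_{AB}:[p_1,p_2]\to[q_1,q_2]$ by $s_{AB}(x)=(q_2-q_1)\, s\!\left(\frac{x-p_1}{p_2-p_1}\right)+q_1$. A rational pair is a point of $\mathbb{R}^2$ with both coordinates rational. Let $F=\{s_{AB}: A,B \text{ rational pairs}, A=(p_1,q_1), B=(p_2,q_2), p_1<p_2, q_1<q_2\}$. For $x,y\in\mathbb{R}$, write $x\sim_F y$ if there is $g\in F$ with $g(x)=y$ or $g^{-1}(x)=y$. Write $x\sim_F^* y$ if there is a finite sequence $x=x_1\sim_F x_2\sim_F\cdots\sim_F x_n=y$ with $n\ge 1$. *)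

theory Defs
  imports "HOL-Analysis.Analysis"
begin

definition hfun :: "real \<Rightarrow> real" where
  "hfun x = (if x \<le> 0 then 0 else exp (- 1 / x))"

definition sfun :: "real \<Rightarrow> real" where
  "sfun x = hfun x / (hfun x + hfun (1 - x))"

definition sAB :: "real \<times> real \<Rightarrow> real \<times> real \<Rightarrow> real \<Rightarrow> real" where
  "sAB A B x = (snd B - snd A) * sfun ((x - fst A) / (fst B - fst A)) + snd A"

definition rational_pair :: "real \<times> real \<Rightarrow> bool" where
  "rational_pair P \<longleftrightarrow> fst P \<in> \<rat> \<and> snd P \<in> \<rat>"

definition admissible :: "real \<times> real \<Rightarrow> real \<times> real \<Rightarrow> bool" where
  "admissible A B \<longleftrightarrow> rational_pair A \<and> rational_pair B \<and> fst A < fst B \<and> snd A < snd B"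

text \<open>x ~_F y: some g = s_AB in F (domain [p1,p2], range [q1,q2]) has g(x) = y or g^{-1}(x) = y.\<close>
definition simF :: "real \<Rightarrow> real \<Rightarrow> bool" where
  "simF x y \<longleftrightarrow> (\<exists>A B. admissible A B \<and>
      ((x \<in> {fst A..fst B} \<and> sAB A B x = y) \<or>
       (y \<in> {fst A..fst B} \<and> sAB A B y = x)))"

definition simF_star :: "real \<Rightarrow> real \<Rightarrow> bool" where
  "simF_star = simF\<^sup>*\<^sup>*"

definition smooth :: "(real \<Rightarrow> real) \<Rightarrow> bool" where
  "smooth t \<longleftrightarrow> (\<forall>n x. ((deriv ^^ n) t) differentiable (at x))"

end

theory Submission
  imports Defs "HOL-Computational_Algebra.Polynomial"
begin

coinductive Cinf :: "(real \<Rightarrow> real) \<Rightarrow> bool" where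
  Cinf_intro: "(\<And>x. f differentiable (at x)) \<Longrightarrow> Cinf (deriv f) \<Longrightarrow> Cinf f"

lemma Cinf_diff: "Cinf f \<Longrightarrow> f differentiable (at x)"
  by (erule Cinf.cases) auto

lemma Cinf_deriv: "Cinf f \<Longrightarrow> Cinf (deriv f)"
  by (erule Cinf.cases) auto

lemma Cinf_DERIV: "Cinf f \<Longrightarrow> DERIV f x :> deriv f x"
  using Cinf_diff DERIV_deriv_iff_real_differentiable by blast

lemma Cinf_higher: "Cinf f \<Longrightarrow> Cinf ((deriv^^k) f)"
  by (induction k) (auto intro: Cinf_deriv)

lemma Cinf_smooth: "Cinf f \<Longrightarrow> smooth f"
  unfolding smooth_def using Cinf_higher Cinf_diff by blast

lemma deriv_const': "deriv (\<lambda>x. c) = (\<lambda>x::real. 0::real)"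
  by (rule ext, rule DERIV_imp_deriv) auto

lemma Cinf_coind:
  assumes "X f" and "\<And>g. X g \<Longrightarrow> (\<forall>x. g differentiable (at x)) \<and> (X (deriv g) \<or> Cinf (deriv g))"
  shows "Cinf f"
  using assms by (coinduction arbitrary: f rule: Cinf.coinduct) blast

lemma Cinf_const: "Cinf (\<lambda>x. c)"
  by (rule Cinf_coind[of "\<lambda>f. \<exists>c. f = (\<lambda>x. c)"]) (auto simp: deriv_const')

lemma higher_deriv_const: "(deriv^^(Suc k)) (\<lambda>x. c) = (\<lambda>x::real. 0::real)"
  by (induction k) (auto simp: deriv_const')

lemma deriv_aff: assumes "Cinf f"
  shows "deriv (\<lambda>x. d * f (a*x+b)) = (\<lambda>x. d * a * deriv f (a*x+b))"
proof
  fix x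
  have "DERIV (\<lambda>x. f (a*x+b)) x :> deriv f (a*x+b) * a"
    by (rule DERIV_chain2[OF Cinf_DERIV[OF assms]]) (auto intro!: derivative_eq_intros)
  then have "DERIV (\<lambda>x. d * f (a*x+b)) x :> d * (deriv f (a*x+b) * a)"
    by (rule DERIV_cmult)
  then show "deriv (\<lambda>x. d * f (a*x+b)) x = d * a * deriv f (a*x+b)"
    by (simp add: DERIV_imp_deriv mult_ac)
qed

lemma Cinf_aff: assumes "Cinf f" shows "Cinf (\<lambda>x. d * f (a*x+b))"
proof (rule Cinf_coind[of "\<lambda>g. \<exists>f d. Cinf f \<and> g = (\<lambda>x. d * f (a*x+b))"])
  show "\<exists>f' d'. Cinf f' \<and> (\<lambda>x. d * f (a*x+b)) = (\<lambda>x. d' * f' (a*x+b))" using assms by blast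
next
  fix g assume "\<exists>f d. Cinf f \<and> g = (\<lambda>x. d * f (a*x+b))"
  then obtain f d where f: "Cinf f" and g: "g = (\<lambda>x. d * f (a*x+b))" by blast
  have "\<forall>x. g differentiable at x"
  proof
    fix x
    have "DERIV (\<lambda>x. f (a*x+b)) x :> deriv f (a*x+b) * a"
      by (rule DERIV_chain2[OF Cinf_DERIV[OF f]]) (auto intro!: derivative_eq_intros)
    then have "DERIV g x :> d * (deriv f (a*x+b) * a)" unfolding g
      by (rule DERIV_cmult)
    then show "g differentiable at x" using real_differentiable_def by blast
  qed
  moreover have "deriv g = (\<lambda>x. (d*a) * deriv f (a*x+b))" unfolding g using deriv_aff[OF f] by simp
  ultimately show "(\<forall>x. g differentiable at x) \<and>
     ((\<exists>f d. Cinf f \<and> deriv g = (\<lambda>x. d * f (a*x+b))) \<or> Cinf (deriv g))"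
    using Cinf_deriv[OF f] by blast
qed

lemma higher_deriv_aff: assumes "Cinf f"
  shows "(deriv^^k) (\<lambda>x. d * f (a*x+b)) = (\<lambda>x. d * a^k * (deriv^^k) f (a*x+b))"
proof (induction k)
  case 0 then show ?case by simp
next
  case (Suc k)
  have "(deriv^^Suc k) (\<lambda>x. d * f (a*x+b)) = deriv (\<lambda>x. (d * a^k) * (deriv^^k) f (a*x+b))"
    using Suc by simp
  also have "\<dots> = (\<lambda>x. d * a^k * a * deriv ((deriv^^k) f) (a*x+b))"
    by (rule deriv_aff[OF Cinf_higher[OF assms]])
  finally show ?case by (simp add: mult_ac)
qed

lemma deriv_add': assumes "Cinf f" "Cinf g"
  shows "deriv (\<lambda>x. f x + g x) = (\<lambda>x. deriv f x + deriv g x)"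
  by (rule ext, rule DERIV_imp_deriv, intro DERIV_add Cinf_DERIV assms)

lemma Cinf_add: assumes "Cinf f" "Cinf g" shows "Cinf (\<lambda>x. f x + g x)"
proof (rule Cinf_coind[of "\<lambda>h. \<exists>f g. Cinf f \<and> Cinf g \<and> h = (\<lambda>x. f x + g x)"])
  show "\<exists>f' g'. Cinf f' \<and> Cinf g' \<and> (\<lambda>x. f x + g x) = (\<lambda>x. f' x + g' x)" using assms by blast
next
  fix h assume "\<exists>f g. Cinf f \<and> Cinf g \<and> h = (\<lambda>x. f x + g x)"
  then obtain f g where f: "Cinf f" and g: "Cinf g" and h: "h = (\<lambda>x. f x + g x)" by blast
  have "\<forall>x. h differentiable at x" unfolding h
    using Cinf_diff[OF f] Cinf_diff[OF g] by (auto intro: differentiable_add)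
  then show "(\<forall>x. h differentiable at x) \<and>
     ((\<exists>f g. Cinf f \<and> Cinf g \<and> deriv h = (\<lambda>x. f x + g x)) \<or> Cinf (deriv h))"
    using deriv_add'[OF f g] Cinf_deriv[OF f] Cinf_deriv[OF g] h by blast
qed

lemma higher_deriv_add: assumes "Cinf f" "Cinf g"
  shows "(deriv^^k) (\<lambda>x. f x + g x) = (\<lambda>x. (deriv^^k) f x + (deriv^^k) g x)"
proof (induction k)
  case 0 then show ?case by simp
next
  case (Suc k)
  then show ?case using deriv_add'[OF Cinf_higher[OF assms(1)] Cinf_higher[OF assms(2)], of k] by simp
qed

type_synonym atom = "(real \<Rightarrow> real) \<times> bool"

fun aval :: "atom \<Rightarrow> real \<Rightarrow> real" where
  "aval (f, b) x = (if b then inverse (f x) else f x)"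

fun aok :: "atom \<Rightarrow> bool" where
  "aok (f, b) = (Cinf f \<and> (b \<longrightarrow> (\<forall>x. f x \<noteq> 0)))"

definition pval :: "atom list \<Rightarrow> real \<Rightarrow> real" where
  "pval p x = prod_list (map (\<lambda>a. aval a x) p)"

definition sval :: "atom list list \<Rightarrow> real \<Rightarrow> real" where
  "sval ps x = sum_list (map (\<lambda>p. pval p x) ps)"

fun datom :: "atom \<Rightarrow> atom list" where
  "datom (f, b) = (if b then [(\<lambda>_. -1, False), (deriv f, False), (f, True), (f, True)]
                   else [(deriv f, False)])"

fun dprod :: "atom list \<Rightarrow> atom list list" where
  "dprod [] = []"
| "dprod (a # p) = (datom a @ p) # map (\<lambda>q. a # q) (dprod p)"

lemma pval_append: "pval (p @ q) x = pval p x * pval q x"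
  by (simp add: pval_def)

lemma pval_Cons: "pval (a # q) x = aval a x * pval q x"
  by (simp add: pval_def)

lemma sval_map_Cons: "sval (map (\<lambda>q. a # q) qs) x = aval a x * sval qs x"
  by (induction qs) (auto simp: sval_def pval_Cons algebra_simps)

lemma sval_append: "sval (p @ q) x = sval p x + sval q x"
  by (simp add: sval_def)

lemma aval_DERIV: assumes "aok a" shows "DERIV (aval a) x :> pval (datom a) x"
proof (cases a)
  case (Pair f b)
  show ?thesis
  proof (cases b)
    case True
    with assms Pair have f: "Cinf f" "\<And>x. f x \<noteq> 0" by auto
    have "DERIV (\<lambda>x. inverse (f x)) x :> - (deriv f x * inverse (f x ^ 2))"
      using DERIV_inverse_fun[OF Cinf_DERIV[OF f(1)] f(2)] by (simp add: numeral_2_eq_2)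
    moreover have "aval a = (\<lambda>x. inverse (f x))" using Pair True by (auto simp: fun_eq_iff)
    moreover have "pval (datom a) x = - (deriv f x * inverse (f x ^ 2))"
      using Pair True by (simp add: pval_def power2_eq_square)
    ultimately show ?thesis by simp
  next
    case False
    with assms Pair have f: "Cinf f" by auto
    have "aval a = f" using Pair False by (auto simp: fun_eq_iff)
    moreover have "pval (datom a) x = deriv f x" using Pair False by (simp add: pval_def)
    ultimately show ?thesis using Cinf_DERIV[OF f] by simp
  qed
qed

lemma pval_DERIV: assumes "\<forall>a\<in>set p. aok a" shows "DERIV (pval p) x :> sval (dprod p) x"
  using assms
proof (induction p)
  case Nil
  then show ?case by (simp add: pval_def sval_def)
next
  case (Cons a p)
  have e: "pval (a # p) = (\<lambda>x. aval a x * pval p x)" by (simp add: fun_eq_iff pval_Cons)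
  have "DERIV (\<lambda>x. aval a x * pval p x) x :> pval (datom a) x * pval p x + aval a x * sval (dprod p) x"
    using DERIV_mult[OF aval_DERIV Cons.IH] Cons.prems by (simp add: mult.commute)
  moreover have "sval (dprod (a # p)) x = pval (datom a) x * pval p x + aval a x * sval (dprod p) x"
    by (simp only: dprod.simps sval_map_Cons[symmetric] pval_append[symmetric])
       (simp add: sval_def)
  ultimately show ?case unfolding e by simp
qed

lemma sval_DERIV: assumes "\<forall>p\<in>set ps. \<forall>a\<in>set p. aok a"
  shows "DERIV (sval ps) x :> sval (concat (map dprod ps)) x"
  using assms
proof (induction ps)
  case Nil
  then show ?case by (simp add: sval_def)
next
  case (Cons p ps)
  have e: "sval (p # ps) = (\<lambda>x. pval p x + sval ps x)" by (simp add: fun_eq_iff sval_def)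
  show ?case unfolding e using DERIV_add[OF pval_DERIV Cons.IH] Cons.prems
    by (simp add: sval_append[unfolded sval_def] sval_def)
qed

lemma datom_ok: "aok a \<Longrightarrow> b \<in> set (datom a) \<Longrightarrow> aok b"
  by (cases a) (auto split: if_splits intro: Cinf_const Cinf_deriv)

lemma dprod_ok: "\<forall>a\<in>set p. aok a \<Longrightarrow> q \<in> set (dprod p) \<Longrightarrow> \<forall>b\<in>set q. aok b"
proof (induction p arbitrary: q)
  case (Cons a p)
  then show ?case using datom_ok[of a] by (auto simp del: aok.simps)
qed simp

lemma Cinf_sval: assumes "\<forall>p\<in>set ps. \<forall>a\<in>set p. aok a" shows "Cinf (sval ps)"
proof (rule Cinf_coind[of "\<lambda>g. \<exists>ps. (\<forall>p\<in>set ps. \<forall>a\<in>set p. aok a) \<and> g = sval ps"])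
  show "\<exists>ps'. (\<forall>p\<in>set ps'. \<forall>a\<in>set p. aok a) \<and> sval ps = sval ps'" using assms by blast
next
  fix g assume "\<exists>ps. (\<forall>p\<in>set ps. \<forall>a\<in>set p. aok a) \<and> g = sval ps"
  then obtain ps where ok: "\<forall>p\<in>set ps. \<forall>a\<in>set p. aok a" and g: "g = sval ps" by blast
  have "\<forall>x. g differentiable at x" unfolding g using sval_DERIV[OF ok] real_differentiable_def by blast
  moreover have "deriv g = sval (concat (map dprod ps))"
    unfolding g by (rule ext, rule DERIV_imp_deriv, rule sval_DERIV[OF ok])
  moreover have "\<forall>p\<in>set (concat (map dprod ps)). \<forall>a\<in>set p. aok a"
    using ok dprod_ok by fastforce
  ultimately show "(\<forall>x. g differentiable at x) \<and>
     ((\<exists>ps. (\<forall>p\<in>set ps. \<forall>a\<in>set p. aok a) \<and> deriv g = sval ps) \<or> Cinf (deriv g))" by blast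
qed

lemma Cinf_div: assumes "Cinf f" "Cinf g" "\<And>x. g x \<noteq> 0" shows "Cinf (\<lambda>x. f x / g x)"
proof -
  have "(\<lambda>x. f x / g x) = sval [[(f, False), (g, True)]]"
    by (simp add: fun_eq_iff sval_def pval_def divide_inverse)
  moreover have "Cinf (sval [[(f, False), (g, True)]])"
    by (rule Cinf_sval) (use assms in auto)
  ultimately show ?thesis by simp
qed

definition Hp :: "real poly \<Rightarrow> real \<Rightarrow> real" where
  "Hp p x = (if x \<le> 0 then 0 else poly p (1/x) * exp (- 1 / x))"

definition dp :: "real poly \<Rightarrow> real poly" where
  "dp p = pCons 0 (pCons 0 (p - pderiv p))"

lemma polyexp_lim: fixes p :: "real poly" shows "((\<lambda>u. poly p u * exp (- u)) \<longlongrightarrow> 0) at_top"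
proof -
  have e: "(\<lambda>u. poly p u * exp (- u)) = (\<lambda>u. \<Sum>i\<le>degree p. coeff p i * (u ^ i / exp u))"
    by (simp add: fun_eq_iff poly_altdef sum_distrib_right exp_minus divide_inverse mult.assoc)
  have "((\<lambda>u. \<Sum>i\<le>degree p. coeff p i * (u ^ i / exp u)) \<longlongrightarrow> (\<Sum>i\<le>degree p. coeff p i * 0)) at_top"
    by (intro tendsto_sum tendsto_mult tendsto_const tendsto_power_div_exp_0)
  then show ?thesis unfolding e by simp
qed

lemma Hp_DERIV: "DERIV (Hp p) x :> Hp (dp p) x"
proof (cases "x > 0")
  case True
  have d1: "DERIV (\<lambda>x. poly p (1/x)) x :> poly (pderiv p) (1/x) * (- inverse (x^2))"
    by (rule DERIV_chain2[OF poly_DERIV]) (use True in \<open>auto intro!: derivative_eq_intros simp: power2_eq_square field_simps\<close>)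
  have d2: "DERIV (\<lambda>x. exp (- 1 / x)) x :> exp (- 1 / x) * inverse (x^2)"
    by (rule DERIV_chain2[of exp]) (use True in \<open>auto intro!: derivative_eq_intros simp: power2_eq_square field_simps\<close>)
  have "DERIV (\<lambda>x. poly p (1/x) * exp (- 1 / x)) x :>
     poly (pderiv p) (1/x) * (- inverse (x^2)) * exp (- 1 / x) + exp (- 1 / x) * inverse (x^2) * poly p (1/x)"
    by (rule DERIV_mult[OF d1 d2])
  moreover have "poly (pderiv p) (1/x) * (- inverse (x^2)) * exp (- 1 / x) + exp (- 1 / x) * inverse (x^2) * poly p (1/x)
      = Hp (dp p) x" using True
    by (simp add: Hp_def dp_def power2_eq_square field_simps)
  ultimately have "DERIV (\<lambda>x. poly p (1/x) * exp (- 1 / x)) x :> Hp (dp p) x" by simp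
  then show ?thesis
    by (rule has_field_derivative_transform_within_open[of _ _ _ "{0<..}"]) (use True in \<open>auto simp: Hp_def\<close>)
next
  case False
  show ?thesis
  proof (cases "x < 0")
    case True
    have "DERIV (\<lambda>x. 0) x :> 0" by simp
    then have "DERIV (Hp p) x :> 0"
      by (rule has_field_derivative_transform_within_open[of _ _ _ "{..<0}"]) (use True in \<open>auto simp: Hp_def\<close>)
    then show ?thesis using True by (simp add: Hp_def)
  next
    case False
    with \<open>\<not> x > 0\<close> have x0: "x = 0" by simp
    have "((\<lambda>y. (Hp p y - Hp p 0) / (y - 0)) \<longlongrightarrow> 0) (at 0)"
    proof (rule filterlim_split_at)
      have "\<forall>\<^sub>F y in at_left (0::real). 0 = (Hp p y - Hp p 0) / (y - 0)"
        using eventually_at_left_real[of "-1" "0::real"] by (simp add: eventually_mono Hp_def)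
      then show "((\<lambda>y. (Hp p y - Hp p 0) / (y - 0)) \<longlongrightarrow> 0) (at_left 0)"
        by (rule Lim_transform_eventually[OF tendsto_const])
    next
      have l: "((\<lambda>y. poly (pCons 0 p) (inverse y) * exp (- inverse y)) \<longlongrightarrow> 0) (at_right 0)"
        by (rule filterlim_compose[OF polyexp_lim filterlim_inverse_at_top_right])
      have "\<forall>\<^sub>F y in at_right (0::real). poly (pCons 0 p) (inverse y) * exp (- inverse y) = (Hp p y - Hp p 0) / (y - 0)"
        using eventually_at_right_real[of "0::real" 1] by (auto elim!: eventually_mono simp: Hp_def field_simps)
      then show "((\<lambda>y. (Hp p y - Hp p 0) / (y - 0)) \<longlongrightarrow> 0) (at_right 0)"
        by (rule Lim_transform_eventually[OF l])
    qed
    then have "DERIV (Hp p) 0 :> 0" by (simp add: has_field_derivative_iff)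
    then show ?thesis using x0 by (simp add: Hp_def)
  qed
qed

lemma Cinf_Hp: "Cinf (Hp p)"
proof (rule Cinf_coind[of "\<lambda>g. \<exists>p. g = Hp p"])
  fix g assume "\<exists>p. g = Hp p"
  then obtain p where g: "g = Hp p" by blast
  have "deriv g = Hp (dp p)" unfolding g by (rule ext, rule DERIV_imp_deriv, rule Hp_DERIV)
  then show "(\<forall>x. g differentiable at x) \<and> ((\<exists>p. deriv g = Hp p) \<or> Cinf (deriv g))"
    unfolding g using Hp_DERIV real_differentiable_def by blast
qed auto

lemma hfun_Hp: "hfun = Hp 1"
  by (simp add: fun_eq_iff hfun_def Hp_def)

lemma Cinf_hfun: "Cinf hfun"
  unfolding hfun_Hp by (rule Cinf_Hp)

lemma hfun_nonneg: "hfun x \<ge> 0" by (simp add: hfun_def)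
lemma hfun_pos: "x > 0 \<Longrightarrow> hfun x > 0" by (simp add: hfun_def)
lemma hfun_zero: "x \<le> 0 \<Longrightarrow> hfun x = 0" by (simp add: hfun_def)
lemma hfun_mono: "x \<le> y \<Longrightarrow> hfun x \<le> hfun y"
  by (auto simp: hfun_def field_simps)
lemma hfun_strict: "0 < x \<Longrightarrow> x < y \<Longrightarrow> hfun x < hfun y"
  by (auto simp: hfun_def field_simps)

lemma sfun_den_pos: "hfun x + hfun (1 - x) > 0"
proof (cases "x > 0")
  case True then show ?thesis using hfun_pos[of x] hfun_nonneg[of "1-x"] by simp
next
  case False then show ?thesis using hfun_pos[of "1-x"] hfun_nonneg[of x] by simp
qed

lemma Cinf_sfun: "Cinf sfun"
proof -
  have c1: "Cinf (\<lambda>x. 1 * hfun ((-1) * x + 1))" by (rule Cinf_aff[OF Cinf_hfun])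
  have c2: "Cinf (\<lambda>x. hfun x + 1 * hfun ((-1) * x + 1))" by (rule Cinf_add[OF Cinf_hfun c1])
  have "Cinf (\<lambda>x. hfun x / (hfun x + 1 * hfun ((-1) * x + 1)))"
    by (rule Cinf_div[OF Cinf_hfun c2]) (use sfun_den_pos in \<open>simp add: add_pos_pos less_imp_neq[symmetric]\<close>)
  then show ?thesis by (simp add: sfun_def[abs_def])
qed

lemma sfun_le0: "x \<le> 0 \<Longrightarrow> sfun x = 0"
  by (simp add: sfun_def hfun_zero)
lemma sfun_ge1: "x \<ge> 1 \<Longrightarrow> sfun x = 1"
  using hfun_pos[of x] by (simp add: sfun_def hfun_zero)
lemma sfun_bounds: "0 \<le> sfun x" "sfun x \<le> 1"
  using sfun_den_pos[of x] hfun_nonneg[of x] hfun_nonneg[of "1-x"] by (auto simp: sfun_def field_simps)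

lemma sfun_strict: assumes "u < v" "u < 1" "0 < v" shows "sfun u < sfun v"
proof -
  have D1: "hfun u + hfun (1-u) > 0" "hfun v + hfun (1-v) > 0" using sfun_den_pos by auto
  have a: "hfun u \<le> hfun v" "hfun (1-v) \<le> hfun (1-u)" using assms by (auto intro: hfun_mono)
  have b: "hfun v > 0" "hfun (1-u) > 0" using assms by (auto intro: hfun_pos)
  have "hfun u * hfun (1-v) < hfun v * hfun (1-u)"
  proof (cases "hfun u * hfun (1-v) = 0")
    case True then show ?thesis using b mult_pos_pos[OF b] by metis
  next
    case False
    then have "hfun u > 0" "hfun (1-v) > 0" using hfun_nonneg by (auto simp: less_le)
    then have "u > 0" "1 - v > 0" using hfun_zero by (auto simp: not_le[symmetric])
    then have "hfun u < hfun v" "hfun (1-v) < hfun (1-u)" using assms by (auto intro: hfun_strict)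
    then show ?thesis using \<open>hfun u > 0\<close> \<open>hfun (1-v) > 0\<close> by (intro mult_strict_mono) auto
  qed
  then show ?thesis using D1 by (simp add: sfun_def divide_less_eq field_simps)
qed

lemma sfun_mono: assumes "u \<le> v" shows "sfun u \<le> sfun v"
proof -
  consider "u = v" | "v \<le> 0" | "u \<ge> 1" | "u < v" "u < 1" "0 < v" using assms by linarith
  then show ?thesis
  proof cases
    case 2 then show ?thesis using sfun_le0[of v] sfun_le0[of u] assms by simp
  next
    case 3 then show ?thesis using sfun_ge1[of v] sfun_ge1[of u] assms by simp
  next
    case 4 then show ?thesis using sfun_strict[of u v] by simp
  qed simp
qed

lemma higher_deriv_sfun_out: assumes "k > 0" "y < 0 \<or> y > 1" shows "(deriv^^k) sfun y = 0"
proof -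
  obtain j where k: "k = Suc j" using assms by (cases k) auto
  from assms(2) show ?thesis
  proof
    assume "y < 0"
    have "eventually (\<lambda>x. sfun x = (\<lambda>_. 0) x) (nhds y)"
      using eventually_nhds_in_open[of "{..<0}" y] \<open>y<0\<close> by (auto elim!: eventually_mono intro: sfun_le0)
    then have "(deriv^^k) sfun y = (deriv^^k) (\<lambda>_. 0) y" by (rule higher_deriv_cong_ev) simp
    then show ?thesis using higher_deriv_const[of j 0] k by simp
  next
    assume "y > 1"
    have "eventually (\<lambda>x. sfun x = (\<lambda>_. 1) x) (nhds y)"
      using eventually_nhds_in_open[of "{1<..}" y] \<open>y>1\<close> by (auto elim!: eventually_mono intro: sfun_ge1)
    then have "(deriv^^k) sfun y = (deriv^^k) (\<lambda>_. 1) y" by (rule higher_deriv_cong_ev) simp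
    then show ?thesis using higher_deriv_const[of j 1] k by simp
  qed
qed

lemma higher_deriv_sfun_bounded: "\<exists>M\<ge>0. \<forall>y. \<bar>(deriv^^k) sfun y\<bar> \<le> M"
proof -
  let ?f = "(deriv^^k) sfun"
  have "continuous_on {0..1} ?f"
    using Cinf_diff[OF Cinf_higher[OF Cinf_sfun]]
    by (intro continuous_at_imp_continuous_on) (auto intro: differentiable_imp_continuous_within)
  then have "compact (?f ` {0..1})" by (rule compact_continuous_image) simp
  then have "bounded (?f ` {0..1})" by (rule compact_imp_bounded)
  then obtain M where M: "\<forall>y\<in>{0..1}. \<bar>?f y\<bar> \<le> M" unfolding bounded_real by auto
  show ?thesis
  proof (cases "k = 0")
    case True
    then show ?thesis using sfun_bounds by (intro exI[of _ 1]) auto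
  next
    case False
    have "\<forall>y. \<bar>?f y\<bar> \<le> max M 0"
    proof
      fix y show "\<bar>?f y\<bar> \<le> max M 0"
      proof (cases "y < 0 \<or> y > 1")
        case True then show ?thesis using higher_deriv_sfun_out[of k y] False by simp
      next
        case F: False
        then have "y \<in> {0..1}" by auto
        then have "\<bar>?f y\<bar> \<le> M" using M by blast
        then show ?thesis by simp
      qed
    qed
    then show ?thesis by (intro exI[of _ "max M 0"]) auto
  qed
qed

lemma flat_step:
  fixes h :: "real \<Rightarrow> real"
  assumes c: "isCont h w" and d: "\<And>x. x \<noteq> w \<Longrightarrow> h differentiable (at x)"
    and l: "(deriv h \<longlongrightarrow> 0) (at w)"
  shows "DERIV h w :> 0"
proof -
  have cont: "\<And>x. isCont h x" using c d differentiable_imp_continuous_within by metis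
  have "((\<lambda>y. (h y - h w) / (y - w)) \<longlongrightarrow> 0) (at w)"
  proof (rule tendstoI)
    fix e :: real assume e: "e > 0"
    from tendstoD[OF l e] obtain r where r: "r > 0" and rr: "\<And>x. x \<noteq> w \<Longrightarrow> dist x w < r \<Longrightarrow> dist (deriv h x) 0 < e"
      unfolding eventually_at by blast
    have "\<forall>y. y \<noteq> w \<and> dist y w < r \<longrightarrow> dist ((h y - h w) / (y - w)) 0 < e"
    proof (intro allI impI)
      fix y assume y: "y \<noteq> w \<and> dist y w < r"
      show "dist ((h y - h w) / (y - w)) 0 < e"
      proof (cases "y < w")
        case True
        have "continuous_on {y..w} h" by (intro continuous_at_imp_continuous_on) (auto intro: cont)
        from MVT[OF True this] obtain l z where z: "y < z" "z < w" "DERIV h z :> l" "h w - h y = (w - y) * l"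
          using d by force
        have "deriv h z = l" using z(3) by (rule DERIV_imp_deriv)
        moreover have "dist (deriv h z) 0 < e" using z y by (intro rr) (auto simp: dist_real_def)
        moreover have "(h y - h w) / (y - w) = l" using z(4) True by (simp add: field_simps)
        ultimately show ?thesis by (simp add: dist_real_def)
      next
        case False
        then have F: "w < y" using y by auto
        have "continuous_on {w..y} h" by (intro continuous_at_imp_continuous_on) (auto intro: cont)
        from MVT[OF F this] obtain l z where z: "w < z" "z < y" "DERIV h z :> l" "h y - h w = (y - w) * l"
          using d by force
        have "deriv h z = l" using z(3) by (rule DERIV_imp_deriv)
        moreover have "dist (deriv h z) 0 < e" using z y by (intro rr) (auto simp: dist_real_def)
        moreover have "(h y - h w) / (y - w) = l" using z(4) F by (simp add: field_simps)
        ultimately show ?thesis by (simp add: dist_real_def)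
      qed
    qed
    then show "\<forall>\<^sub>F y in at w. dist ((h y - h w) / (y - w)) 0 < e"
      unfolding eventually_at using r by blast
  qed
  then show ?thesis by (simp add: has_field_derivative_iff)
qed

lemma flat_smooth:
  fixes g :: "real \<Rightarrow> real"
  assumes d: "\<And>k x. x \<noteq> w \<Longrightarrow> (deriv^^k) g differentiable (at x)"
    and c: "isCont g w"
    and l: "\<And>k. k > 0 \<Longrightarrow> ((deriv^^k) g \<longlongrightarrow> 0) (at w)"
  shows "smooth g"
proof -
  have *: "isCont ((deriv^^k) g) w \<and> DERIV ((deriv^^k) g) w :> 0" for k
  proof (induction k)
    case 0
    have "DERIV g w :> 0" using flat_step[OF c, of] d[of _ 0] l[of 1] by simp
    then show ?case using c by simp
  next
    case (Suc k)
    have "deriv ((deriv^^k) g) w = 0" using Suc DERIV_imp_deriv by blast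
    then have v: "(deriv^^Suc k) g w = 0" by simp
    have "isCont ((deriv^^Suc k) g) w" unfolding isCont_def v using l[of "Suc k"] by simp
    moreover have "DERIV ((deriv^^Suc k) g) w :> 0"
      using flat_step[OF calculation, of] d[of _ "Suc k"] l[of "Suc (Suc k)"] by simp
    ultimately show ?case by simp
  qed
  show ?thesis unfolding smooth_def
  proof (intro allI)
    fix k x show "(deriv^^k) g differentiable (at x)"
      using d[of x k] *[of k] real_differentiable_def by (cases "x = w") auto
  qed
qed

locale knots =
  fixes K V :: "int \<Rightarrow> real" and w z :: real
  assumes K_mono: "\<And>n. K n < K (n+1)" and V_mono: "\<And>n. V n < V (n+1)"
  and K_w: "\<And>n. K n < w" and V_z: "\<And>n. V n < z"
  and K_rat: "\<And>n. K n \<in> \<rat>" and V_rat: "\<And>n. V n \<in> \<rat>"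
  and V_unb: "\<And>c. \<exists>n. V n < c"
  and K_unb: "\<And>c. \<exists>n. K n < c"
  and K_lim: "\<And>e. e > 0 \<Longrightarrow> \<exists>N. w - K N < e"
  and V_lim: "\<And>e. e > 0 \<Longrightarrow> \<exists>N. z - V N < e"
  and flat: "\<And>k e. k > 0 \<Longrightarrow> e > 0 \<Longrightarrow> \<exists>N. \<forall>n\<ge>N. (V(n+1) - V n) / (K(n+1) - K n)^k < e"
begin

lemma gen_strict:
  fixes F :: "int \<Rightarrow> real"
  assumes "\<And>n. F n < F (n+1)" "m < n" shows "F m < F n"
proof -
  have "F m < F (m + 1 + int j)" for j
  proof (induction j)
    case 0 then show ?case using assms(1) by simp
  next
    case (Suc j)
    have "F (m + 1 + int j) < F (m + 1 + int j + 1)" by (rule assms(1))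
    then show ?case using Suc by (simp add: add.assoc)
  qed
  moreover have "n = m + 1 + int (nat (n - m - 1))" using assms(2) by simp
  ultimately show ?thesis by metis
qed

lemma K_strict: "m < n \<Longrightarrow> K m < K n" using gen_strict[of K, OF K_mono] .
lemma V_strict: "m < n \<Longrightarrow> V m < V n" using gen_strict[of V, OF V_mono] .
lemma K_le: "m \<le> n \<Longrightarrow> K m \<le> K n" using K_strict by (cases "m = n") (auto simp: less_le)
lemma V_le: "m \<le> n \<Longrightarrow> V m \<le> V n" using V_strict by (cases "m = n") (auto simp: less_le)

lemma K_le_iff: "K m \<le> K n \<longleftrightarrow> m \<le> n"
  using K_strict K_le by (meson not_le)
lemma K_less_iff: "K m < K n \<longleftrightarrow> m < n"
  using K_strict K_le by (meson not_le)

definition idx :: "real \<Rightarrow> int" where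
  "idx x = (THE n. K n \<le> x \<and> x < K (n+1))"

lemma idx_ex: assumes "x < w" shows "\<exists>n. K n \<le> x \<and> x < K (n+1)"
proof (rule ccontr)
  assume no: "\<not> ?thesis"
  obtain n0 where n0: "K n0 < x" using K_unb by blast
  obtain N where N: "w - K N < w - x" using K_lim[of "w - x"] assms by auto
  have all: "K i \<le> x" if "n0 \<le> i" for i
    using that
  proof (induction i rule: int_ge_induct)
    case base then show ?case using n0 by simp
  next
    case (step i) then show ?case using no by (meson not_le)
  qed
  have "n0 \<le> N"
  proof (rule ccontr)
    assume "\<not> n0 \<le> N" then have "K N < K n0" using K_strict by simp
    then show False using N n0 by simp
  qed
  then show False using all[of N] N by simp
qed

lemma idx_eq: assumes "K n \<le> x" "x < K (n+1)" shows "idx x = n"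
  unfolding idx_def
proof (rule the_equality)
  fix m assume m: "K m \<le> x \<and> x < K (m+1)"
  have "\<not> m < n"
  proof
    assume "m < n" then have "K (m+1) \<le> K n" using K_le by simp
    then show False using m assms by simp
  qed
  moreover have "\<not> n < m"
  proof
    assume "n < m" then have "K (n+1) \<le> K m" using K_le by simp
    then show False using m assms by simp
  qed
  ultimately show "m = n" by simp
qed (use assms in auto)

lemma idx_prop: assumes "x < w" shows "K (idx x) \<le> x" "x < K (idx x + 1)"
  using idx_ex[OF assms] idx_eq by auto

definition P :: "int \<Rightarrow> real \<Rightarrow> real" where
  "P n y = (V(n+1) - V n) * sfun ((y - K n) / (K(n+1) - K n)) + V n"

lemma P_le: "y \<le> K n \<Longrightarrow> P n y = V n"
  using K_mono[of n] by (simp add: P_def sfun_le0 divide_nonpos_pos)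

lemma P_ge: "y \<ge> K (n+1) \<Longrightarrow> P n y = V (n+1)"
  using K_mono[of n] by (simp add: P_def sfun_ge1)

lemma P_lt: assumes "y < K (n+1)" shows "P n y < V (n+1)"
proof -
  have l: "K (n+1) - K n > 0" using K_mono[of n] by simp
  have "(y - K n) / (K(n+1) - K n) < 1" using assms l by (simp add: divide_less_eq)
  then have "sfun ((y - K n) / (K(n+1) - K n)) < 1"
    using sfun_strict[of _ 1] sfun_ge1[of 1] sfun_le0 by (cases "(y - K n) / (K(n+1) - K n) \<le> 0") force+
  then have "(V(n+1) - V n) * sfun ((y - K n) / (K(n+1) - K n)) < (V(n+1) - V n) * 1"
    using V_mono[of n] by (intro mult_strict_left_mono) auto
  then show ?thesis by (simp add: P_def)
qed

lemma P_ge_V: "P n y \<ge> V n"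
  using V_mono[of n] sfun_bounds by (simp add: P_def)

lemma P_strict: assumes "K n \<le> x" "x < y" "y \<le> K (n+1)" shows "P n x < P n y"
proof -
  have l: "K (n+1) - K n > 0" using K_mono[of n] by simp
  let ?u = "(x - K n) / (K(n+1) - K n)" and ?v = "(y - K n) / (K(n+1) - K n)"
  have "?u < ?v" using assms l by (simp add: divide_strict_right_mono)
  moreover have "?u < 1" using assms l by (simp add: divide_less_eq)
  moreover have "0 < ?v" using assms l by simp
  ultimately have "sfun ?u < sfun ?v" by (rule sfun_strict)
  then show ?thesis using V_mono[of n] by (simp add: P_def)
qed

definition T :: "real \<Rightarrow> real" where
  "T x = P (idx x) x"

lemma T_P: assumes "x < w" "K m \<le> x" "x \<le> K (m+1)" shows "T x = P m x"
proof (cases "x = K (m+1)")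
  case True
  have "idx x = m + 1" using True K_mono[of "m+1"] by (intro idx_eq) auto
  then show ?thesis using True by (simp add: T_def P_le P_ge)
next
  case False
  then have "idx x = m" using assms by (intro idx_eq) auto
  then show ?thesis by (simp add: T_def)
qed

lemma T_bounds: assumes "x < w" shows "V (idx x) \<le> T x" "T x < V (idx x + 1)" "T x < z"
proof -
  show "V (idx x) \<le> T x" by (simp add: T_def P_ge_V)
  show "T x < V (idx x + 1)" unfolding T_def by (rule P_lt) (use idx_prop[OF assms] in auto)
  then show "T x < z" using V_z[of "idx x + 1"] by simp
qed

lemma T_strict: assumes "x < y" "y < w" shows "T x < T y"
proof -
  have x: "x < w" using assms by simp
  have "idx x \<le> idx y"
  proof (rule ccontr)
    assume "\<not> ?thesis" then have "idx y + 1 \<le> idx x" by simp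
    then have "K (idx y + 1) \<le> K (idx x)" using K_le by simp
    then show False using idx_prop[OF x] idx_prop[OF assms(2)] assms(1) by simp
  qed
  then consider "idx x = idx y" | "idx x + 1 \<le> idx y" by linarith
  then show ?thesis
  proof cases
    case 1
    have "T y = P (idx x) y" using 1 by (simp add: T_def)
    moreover have "P (idx x) x < P (idx x) y"
      using idx_prop[OF x] idx_prop[OF assms(2)] assms(1) 1 by (intro P_strict) auto
    ultimately show ?thesis by (simp add: T_def)
  next
    case 2
    have "T x < V (idx x + 1)" using T_bounds[OF x] by simp
    also have "\<dots> \<le> V (idx y)" using V_le[OF 2] .
    also have "\<dots> \<le> T y" using T_bounds[OF assms(2)] by simp
    finally show ?thesis .
  qed
qed

lemma T_rel: assumes "x < w" shows "simF_star (T x) x"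
proof -
  let ?n = "idx x"
  let ?A = "(K ?n, V ?n)" and ?B = "(K (?n+1), V (?n+1))"
  have "admissible ?A ?B"
    using K_rat V_rat K_mono V_mono by (simp add: admissible_def rational_pair_def)
  moreover have "x \<in> {fst ?A..fst ?B}" using idx_prop[OF assms] by simp
  moreover have "sAB ?A ?B x = T x" by (simp add: sAB_def T_def P_def)
  ultimately have "simF (T x) x" unfolding simF_def by blast
  then show ?thesis unfolding simF_star_def by simp
qed

definition t :: "real \<Rightarrow> real" where
  "t x = (if x < w then T x else if x = w then z else 2*z - T (2*w - x))"

lemma t_strict: "strict_mono t"
  unfolding strict_mono_def
proof (intro allI impI)
  fix x y :: real assume xy: "x < y"
  consider "y < w" | "x < w" "y = w" | "x < w" "w < y" | "x = w" "w < y" | "w < x"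
    using xy by linarith
  then show "t x < t y"
  proof cases
    case 1 then show ?thesis using T_strict[OF xy] xy by (simp add: t_def)
  next
    case 2 then show ?thesis using T_bounds[of x] by (simp add: t_def)
  next
    case 3 then show ?thesis using T_bounds[of x] T_bounds[of "2*w - y"] by (simp add: t_def)
  next
    case 4 then show ?thesis using T_bounds[of "2*w - y"] by (simp add: t_def)
  next
    case 5 then show ?thesis using T_strict[of "2*w - y" "2*w - x"] xy by (simp add: t_def)
  qed
qed

lemma t_rel: "x < w \<Longrightarrow> simF_star (t x) x"
  using T_rel by (simp add: t_def)

lemma t_w: "t w = z" by (simp add: t_def)

end

lemma loc_model:
  assumes "open U" "x \<in> U" "\<And>y. y \<in> U \<Longrightarrow> f y = g y" "Cinf g"
  shows "(deriv^^k) f differentiable (at x) \<and> (deriv^^k) f x = (deriv^^k) g x"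
proof -
  have eq: "(deriv^^k) f y = (deriv^^k) g y" if "y \<in> U" for y
  proof (rule higher_deriv_cong_ev)
    show "\<forall>\<^sub>F x in nhds y. f x = g x"
      using eventually_nhds_in_open[OF assms(1) that] assms(3) by (auto elim!: eventually_mono)
  qed simp
  have "DERIV ((deriv^^k) g) x :> deriv ((deriv^^k) g) x"
    by (rule Cinf_DERIV[OF Cinf_higher[OF assms(4)]])
  then have "DERIV ((deriv^^k) f) x :> deriv ((deriv^^k) g) x"
    by (rule has_field_derivative_transform_within_open[OF _ assms(1,2)]) (simp add: eq)
  then show ?thesis using eq[OF assms(2)] real_differentiable_def by blast
qed

context knots begin

definition a :: "int \<Rightarrow> real" where "a n = 1 / (K(n+1) - K n)"
definition b :: "int \<Rightarrow> real" where "b n = - K n / (K(n+1) - K n)"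
definition dl :: "int \<Rightarrow> real" where "dl n = V(n+1) - V n"
definition Q :: "int \<Rightarrow> real \<Rightarrow> real" where "Q n y = dl n * sfun (a n * y + b n)"
definition psi :: "int \<Rightarrow> real \<Rightarrow> real" where "psi n y = Q (n-1) y + Q n y + V (n-1)"
definition beta :: "nat \<Rightarrow> int \<Rightarrow> real" where "beta k n = (V(n+1) - V n) / (K(n+1) - K n)^k"

lemma P_alt: "P n y = Q n y + V n"
proof -
  have "(y - K n) / (K(n+1) - K n) = a n * y + b n"
    by (simp add: a_def b_def diff_divide_distrib)
  then show ?thesis by (simp add: P_def Q_def dl_def)
qed

lemma T_psi: assumes "x < w" "K (n-1) < x" "x < K (n+1)" shows "T x = psi n x"
proof (cases "x \<le> K n")
  case True
  have "T x = P (n-1) x" using assms True by (intro T_P) auto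
  moreover have "Q n x = 0" using P_le[OF True] P_alt[of n x] by simp
  ultimately show ?thesis by (simp add: psi_def P_alt)
next
  case False
  have "T x = P n x" using assms False by (intro T_P) auto
  moreover have "P (n-1) x = V n" using False by (intro P_ge[of "n-1" x, simplified]) auto
  ultimately show ?thesis using P_alt[of "n-1" x] by (simp add: psi_def P_alt)
qed

lemma Cinf_Q: "Cinf (Q n)"
proof -
  have "Q n = (\<lambda>y. dl n * sfun (a n * y + b n))" by (simp add: fun_eq_iff Q_def)
  then show ?thesis using Cinf_aff[OF Cinf_sfun] by simp
qed

lemma psi_eq: "psi n = (\<lambda>y. (\<lambda>y. Q (n-1) y + Q n y) y + (\<lambda>_. V (n-1)) y)"
  by (simp add: fun_eq_iff psi_def)

lemma Cinf_psi: "Cinf (psi n)"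
  unfolding psi_eq by (intro Cinf_add Cinf_Q Cinf_const)

lemma higher_deriv_Q: "(deriv^^k) (Q n) = (\<lambda>y. dl n * a n ^ k * (deriv^^k) sfun (a n * y + b n))"
proof -
  have "Q n = (\<lambda>y. dl n * sfun (a n * y + b n))" by (simp add: fun_eq_iff Q_def)
  then show ?thesis using higher_deriv_aff[OF Cinf_sfun] by simp
qed

lemma higher_deriv_psi: assumes "k > 0"
  shows "(deriv^^k) (psi n) y = (deriv^^k) (Q (n-1)) y + (deriv^^k) (Q n) y"
proof -
  obtain j where k: "k = Suc j" using assms by (cases k) auto
  show ?thesis unfolding psi_eq
    by (simp only: higher_deriv_add[OF Cinf_add[OF Cinf_Q Cinf_Q] Cinf_const]
        higher_deriv_add[OF Cinf_Q Cinf_Q] k higher_deriv_const)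
qed

lemma beta_alt: "beta k n = dl n * a n ^ k"
  by (simp add: beta_def dl_def a_def power_one_over)

lemma beta_nonneg: "beta k n \<ge> 0"
  using V_mono[of n] K_mono[of n] by (simp add: beta_def)

lemma psi_bound: assumes "k > 0"
  shows "\<exists>M\<ge>0. \<forall>n y. \<bar>(deriv^^k) (psi n) y\<bar> \<le> M * (beta k (n-1) + beta k n)"
proof -
  obtain M where M: "M \<ge> 0" "\<And>y. \<bar>(deriv^^k) sfun y\<bar> \<le> M"
    using higher_deriv_sfun_bounded[of k] by blast
  have Qb: "\<bar>(deriv^^k) (Q m) y\<bar> \<le> M * beta k m" for m y
  proof -
    have "\<bar>(deriv^^k) (Q m) y\<bar> = \<bar>beta k m * (deriv^^k) sfun (a m * y + b m)\<bar>"
      by (simp add: higher_deriv_Q beta_alt)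
    also have "\<dots> = beta k m * \<bar>(deriv^^k) sfun (a m * y + b m)\<bar>"
      by (simp only: abs_mult abs_of_nonneg[OF beta_nonneg])
    also have "\<dots> \<le> beta k m * M" using M(2) beta_nonneg by (intro mult_left_mono) auto
    finally show ?thesis by (simp add: mult.commute)
  qed
  show ?thesis
  proof (intro exI[of _ M] conjI allI)
    fix n y
    have "\<bar>(deriv^^k) (psi n) y\<bar> \<le> \<bar>(deriv^^k) (Q (n-1)) y\<bar> + \<bar>(deriv^^k) (Q n) y\<bar>"
      unfolding higher_deriv_psi[OF assms] by (rule abs_triangle_ineq)
    also have "\<dots> \<le> M * beta k (n-1) + M * beta k n" using Qb by (intro add_mono) auto
    finally show "\<bar>(deriv^^k) (psi n) y\<bar> \<le> M * (beta k (n-1) + beta k n)" by (simp add: algebra_simps)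
  qed (use M in auto)
qed

lemma left_model: assumes "x < w"
  shows "(deriv^^k) t differentiable (at x) \<and> (deriv^^k) t x = (deriv^^k) (psi (idx x)) x"
proof (rule loc_model[OF _ _ _ Cinf_psi])
  let ?n = "idx x"
  show "open {K (?n-1)<..<K (?n+1)}" by simp
  show "x \<in> {K (?n-1)<..<K (?n+1)}" using idx_prop[OF assms] K_mono[of "?n - 1"] by simp
  fix y assume y: "y \<in> {K (?n-1)<..<K (?n+1)}"
  then have "y < w" using K_w[of "?n+1"] by simp
  then show "t y = psi ?n y" using y T_psi[of y ?n] by (simp add: t_def)
qed

definition phi :: "int \<Rightarrow> real \<Rightarrow> real" where
  "phi n = (\<lambda>y. (\<lambda>y. (-1) * psi n ((-1) * y + 2*w)) y + (\<lambda>_. 2*z) y)"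

lemma Cinf_phi: "Cinf (phi n)"
  unfolding phi_def by (intro Cinf_add Cinf_aff Cinf_psi Cinf_const)

lemma higher_deriv_phi: assumes "k > 0"
  shows "\<bar>(deriv^^k) (phi n) y\<bar> = \<bar>(deriv^^k) (psi n) (2*w - y)\<bar>"
proof -
  obtain j where k: "k = Suc j" using assms by (cases k) auto
  have "(deriv^^k) (phi n) y = (-1) * (-1)^k * (deriv^^k) (psi n) ((-1) * y + 2*w)"
    unfolding phi_def
    by (simp only: higher_deriv_add[OF Cinf_aff[OF Cinf_psi] Cinf_const] higher_deriv_aff[OF Cinf_psi]
        k higher_deriv_const)
  then show ?thesis by (simp add: abs_mult)
qed

lemma right_model: assumes "x > w"
  shows "(deriv^^k) t differentiable (at x) \<and> (deriv^^k) t x = (deriv^^k) (phi (idx (2*w - x))) x"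
proof (rule loc_model[OF _ _ _ Cinf_phi])
  let ?n = "idx (2*w - x)"
  have x': "2*w - x < w" using assms by simp
  show "open {2*w - K (?n+1)<..<2*w - K (?n-1)}" by simp
  show "x \<in> {2*w - K (?n+1)<..<2*w - K (?n-1)}" using idx_prop[OF x'] K_mono[of "?n - 1"] by simp
  fix y assume y: "y \<in> {2*w - K (?n+1)<..<2*w - K (?n-1)}"
  then have "y > w" using K_w[of "?n+1"] by simp
  moreover have "T (2*w - y) = psi ?n (2*w - y)" using y \<open>y > w\<close> by (intro T_psi) auto
  ultimately show "t y = phi ?n y" by (simp add: t_def phi_def)
qed

lemma t_diff: "x \<noteq> w \<Longrightarrow> (deriv^^k) t differentiable (at x)"
  using left_model[of x k] right_model[of x k] by (cases "x < w") auto

definition rf :: "real \<Rightarrow> real" where "rf y = (if y < w then y else 2*w - y)"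

lemma t_bound: assumes "k > 0"
  shows "\<exists>M\<ge>0. \<forall>y. y \<noteq> w \<longrightarrow> \<bar>(deriv^^k) t y\<bar> \<le> M * (beta k (idx (rf y) - 1) + beta k (idx (rf y)))"
proof -
  obtain M where M: "M \<ge> 0" "\<And>n y. \<bar>(deriv^^k) (psi n) y\<bar> \<le> M * (beta k (n-1) + beta k n)"
    using psi_bound[OF assms] by blast
  show ?thesis
  proof (intro exI[of _ M] conjI allI impI)
    fix y assume yw: "y \<noteq> w"
    show "\<bar>(deriv^^k) t y\<bar> \<le> M * (beta k (idx (rf y) - 1) + beta k (idx (rf y)))"
    proof (cases "y < w")
      case True
      then show ?thesis using left_model[OF True, of k] M(2) by (simp add: rf_def)
    next
      case False
      then have "y > w" using yw by simp
      then show ?thesis using right_model[OF \<open>y > w\<close>, of k] M(2) higher_deriv_phi[OF assms]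
        by (simp add: rf_def)
    qed
  qed (use M in auto)
qed

lemma rf_prop: assumes "y \<noteq> w" shows "rf y < w" "\<bar>rf y - w\<bar> = \<bar>y - w\<bar>"
  using assms by (auto simp: rf_def)

lemma idx_large: assumes "K N < x" "x < w" shows "N \<le> idx x"
proof -
  have "K N < K (idx x + 1)" using idx_prop[OF assms(2)] assms(1) by simp
  then show ?thesis using K_less_iff by simp
qed

lemma t_deriv_lim: assumes "k > 0" shows "((deriv^^k) t \<longlongrightarrow> 0) (at w)"
proof (rule tendstoI)
  fix e :: real assume e: "e > 0"
  obtain M where M: "M \<ge> 0" "\<And>y. y \<noteq> w \<Longrightarrow> \<bar>(deriv^^k) t y\<bar> \<le> M * (beta k (idx (rf y) - 1) + beta k (idx (rf y)))"
    using t_bound[OF assms] by blast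
  define e' where "e' = e / (2 * (M + 1))"
  have e': "e' > 0" using e M by (simp add: e'_def)
  obtain N where N: "\<And>n. n \<ge> N \<Longrightarrow> beta k n < e'"
    using flat[OF assms e'] unfolding beta_def by blast
  define r where "r = w - K (N+1)"
  have r: "r > 0" using K_w[of "N+1"] by (simp add: r_def)
  have "\<forall>y. y \<noteq> w \<and> dist y w < r \<longrightarrow> dist ((deriv^^k) t y) 0 < e"
  proof (intro allI impI)
    fix y assume y: "y \<noteq> w \<and> dist y w < r"
    have "K (N+1) < rf y" using rf_prop[of y] y by (auto simp: r_def dist_real_def)
    then have "N + 1 \<le> idx (rf y)" using rf_prop[of y] y by (intro idx_large) auto
    then have b: "beta k (idx (rf y) - 1) < e'" "beta k (idx (rf y)) < e'" using N by auto
    have "\<bar>(deriv^^k) t y\<bar> \<le> M * (beta k (idx (rf y) - 1) + beta k (idx (rf y)))" using M y by auto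
    also have "\<dots> \<le> M * (2 * e')" using b M by (intro mult_left_mono) auto
    also have "\<dots> < e" using e M by (simp add: e'_def field_simps)
    finally show "dist ((deriv^^k) t y) 0 < e" by (simp add: dist_real_def)
  qed
  then show "\<forall>\<^sub>F y in at w. dist ((deriv^^k) t y) 0 < e"
    unfolding eventually_at using r by blast
qed

lemma t_cont: "isCont t w"
  unfolding isCont_def t_w
proof (rule tendstoI)
  fix e :: real assume e: "e > 0"
  obtain N where N: "z - V N < e" using V_lim[OF e] by blast
  define r where "r = w - K N"
  have r: "r > 0" using K_w[of N] by (simp add: r_def)
  have "\<forall>y. y \<noteq> w \<and> dist y w < r \<longrightarrow> dist (t y) z < e"
  proof (intro allI impI)
    fix y assume y: "y \<noteq> w \<and> dist y w < r"
    have "K N < rf y" using rf_prop[of y] y by (auto simp: r_def dist_real_def)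
    then have "N \<le> idx (rf y)" using rf_prop[of y] y by (intro idx_large) auto
    then have "V N \<le> T (rf y)" using V_le T_bounds[of "rf y"] rf_prop[of y] y by (meson order_trans)
    moreover have "T (rf y) < z" using T_bounds[of "rf y"] rf_prop[of y] y by auto
    moreover have "dist (t y) z = \<bar>T (rf y) - z\<bar>" using y by (auto simp: t_def rf_def dist_real_def)
    ultimately show "dist (t y) z < e" using N by simp
  qed
  then show "\<forall>\<^sub>F y in at w. dist (t y) z < e"
    unfolding eventually_at using r by blast
qed

lemma t_smooth: "smooth t"
  by (rule flat_smooth[OF t_diff t_cont t_deriv_lim])

lemma t_bij: "bij t"
proof -
  have inj: "inj t" using t_strict strict_mono_imp_inj_on by blast
  have cont: "continuous_on S t" for S
    using t_smooth unfolding smooth_def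
    by (intro continuous_at_imp_continuous_on ballI differentiable_imp_continuous_within)
       (metis funpow_0)
  have "surj t"
  proof -
    have "\<exists>x. t x = c" for c
    proof -
      obtain n where n: "V n < c" using V_unb by blast
      obtain m where m: "V m < 2*z - c" using V_unb by blast
      have ta: "t (K n) = V n" using K_w[of n] T_P[of "K n" n] K_mono[of n] by (simp add: t_def P_le)
      have "2*w - K m > w" using K_w[of m] by simp
      then have tb: "t (2*w - K m) = 2*z - V m"
        using K_w[of m] T_P[of "K m" m] K_mono[of m] by (simp add: t_def P_le)
      have "K n \<le> 2*w - K m" using K_w[of n] K_w[of m] by simp
      from IVT'[of t "K n" c "2*w - K m", OF _ _ this cont] ta tb n m
      show ?thesis by force
    qed
    then show ?thesis by (metis surjI)
  qed
  then show ?thesis using inj by (simp add: bij_def)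
qed

end

definition mm :: "nat \<Rightarrow> real" where "mm j = (1/4)^(Suc j)"
definition ee :: "nat \<Rightarrow> real" where "ee j = (1/2)^j * mm j ^ j"

lemma mm_pos: "mm j > 0" by (simp add: mm_def)
lemma mm_le1: "mm j \<le> 1" unfolding mm_def by (rule power_le_one) auto
lemma ee_pos: "ee j > 0" using mm_pos by (simp add: ee_def)

lemma ee_Suc: "ee (Suc j) \<le> ee j / 2"
proof -
  have "mm (Suc j) \<le> mm j" by (simp add: mm_def)
  then have "mm (Suc j) ^ Suc j \<le> mm j ^ Suc j" using mm_pos by (intro power_mono) (auto intro: less_imp_le)
  also have "\<dots> \<le> mm j ^ j" using mm_pos mm_le1 by (simp add: mult_left_le_one_le less_imp_le)
  finally have "mm (Suc j) ^ Suc j \<le> mm j ^ j" .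
  then have "(1/2)^Suc j * mm (Suc j) ^ Suc j \<le> (1/2)^Suc j * mm j ^ j" by (intro mult_left_mono) auto
  then show ?thesis by (simp add: ee_def)
qed

lemma ee_le: "ee j \<le> (1/2)^j"
  using mm_pos mm_le1 by (simp add: ee_def power_le_one less_imp_le mult_left_le_one_le)

lemma ee_div: assumes "k \<le> j" shows "ee j / mm j ^ k \<le> (1/2)^j"
proof -
  have "mm j ^ j = mm j ^ (j - k) * mm j ^ k" using assms by (simp add: power_add[symmetric])
  moreover have m0: "mm j \<noteq> 0" using mm_pos[of j] by simp
  ultimately have "ee j / mm j ^ k = (1/2)^j * mm j ^ (j - k)" by (simp add: ee_def)
  also have "\<dots> \<le> (1/2)^j" using mm_pos mm_le1 by (simp add: power_le_one less_imp_le mult_left_le_one_le)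
  finally show ?thesis .
qed

theorem mainTheorem8:
  fixes w z :: real
  shows "\<exists>t :: real \<Rightarrow> real. smooth t \<and> strict_mono t \<and> bij t \<and> t w = z \<and>
           (\<forall>x < w. simF_star (t x) x)"
proof -
  have "\<forall>j::nat. \<exists>q. q \<in> \<rat> \<and> w - (1/4)^j < q \<and> q < w - (1/4)^j/2"
  proof
    fix j :: nat have "w - (1/4)^j < w - (1/4::real)^j/2" by simp
    then show "\<exists>q. q \<in> \<rat> \<and> w - (1/4)^j < q \<and> q < w - (1/4)^j/2" using Rats_dense_in_real by metis
  qed
  then obtain Kp where Kp: "\<And>j. Kp j \<in> \<rat>" "\<And>j. w - (1/4)^j < Kp j" "\<And>j. Kp j < w - (1/4)^j/2"
    by metis
  have "\<forall>j::nat. \<exists>q. q \<in> \<rat> \<and> z - ee j < q \<and> q < z - ee j/2"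
  proof
    fix j have "z - ee j < z - ee j / 2" using ee_pos[of j] by simp
    then show "\<exists>q. q \<in> \<rat> \<and> z - ee j < q \<and> q < z - ee j/2" using Rats_dense_in_real by metis
  qed
  then obtain Vp where Vp: "\<And>j. Vp j \<in> \<rat>" "\<And>j. z - ee j < Vp j" "\<And>j. Vp j < z - ee j/2"
    by metis
  define K where "K n = (if n < 0 then Kp 0 + of_int n else Kp (nat n))" for n :: int
  define V where "V n = (if n < 0 then Vp 0 + of_int n else Vp (nat n))" for n :: int
  have Kp_Suc: "Kp j < Kp (Suc j)" for j
  proof -
    have "Kp j < w - (1/4)^j/2" by (rule Kp(3))
    also have "\<dots> \<le> w - (1/4)^(Suc j)" by simp
    also have "\<dots> < Kp (Suc j)" by (rule Kp(2))
    finally show ?thesis .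
  qed
  have Vp_Suc: "Vp j < Vp (Suc j)" for j
  proof -
    have "Vp j < z - ee j/2" by (rule Vp(3))
    also have "\<dots> \<le> z - ee (Suc j)" using ee_Suc[of j] by simp
    also have "\<dots> < Vp (Suc j)" by (rule Vp(2))
    finally show ?thesis .
  qed
  have Kp_w: "Kp j < w" for j using Kp(3)[of j] by (smt (verit) zero_less_power divide_pos_pos)
  have Vp_z: "Vp j < z" for j using Vp(3)[of j] ee_pos[of j] by simp
  have nat1: "nat (n+1) = Suc (nat n)" if "n \<ge> 0" for n :: int using that by simp
  interpret knots K V w z
  proof
    fix n :: int
    show "K n < K (n+1)"
      using Kp_Suc[of "nat n"] nat1[of n] by (cases "n < -1"; cases "n = -1") (auto simp: K_def)
    show "V n < V (n+1)"
      using Vp_Suc[of "nat n"] nat1[of n] by (cases "n < -1"; cases "n = -1") (auto simp: V_def)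
    show "K n < w" using Kp_w[of 0] Kp_w[of "nat n"] by (auto simp: K_def)
    show "V n < z" using Vp_z[of 0] Vp_z[of "nat n"] by (auto simp: V_def)
    show "K n \<in> \<rat>" using Kp(1) by (auto simp: K_def)
    show "V n \<in> \<rat>" using Vp(1) by (auto simp: V_def)
  next
    fix c
    define n where "n = min (-1) (\<lfloor>c - Vp 0\<rfloor> - 1)"
    have "V n < c" unfolding V_def n_def by (auto simp: min_def) linarith+
    then show "\<exists>n. V n < c" by blast
  next
    fix c
    define n where "n = min (-1) (\<lfloor>c - Kp 0\<rfloor> - 1)"
    have "K n < c" unfolding K_def n_def by (auto simp: min_def) linarith+
    then show "\<exists>n. K n < c" by blast
  next
    fix e :: real assume e: "e > 0"
    obtain j where j: "(1/4::real)^j < e" using real_arch_pow_inv[OF e, of "1/4"] by auto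
    have "w - K (int j) < e" using Kp(2)[of j] j by (simp add: K_def)
    then show "\<exists>N. w - K N < e" by blast
  next
    fix e :: real assume e: "e > 0"
    obtain j where j: "(1/2::real)^j < e" using real_arch_pow_inv[OF e, of "1/2"] by auto
    have "z - V (int j) < e" using Vp(2)[of j] j ee_le[of j] by (simp add: V_def)
    then show "\<exists>N. z - V N < e" by blast
  next
    fix k :: nat and e :: real assume k: "k > 0" and e: "e > 0"
    obtain j0 where j0: "(1/2::real)^j0 < e" using real_arch_pow_inv[OF e, of "1/2"] by auto
    show "\<exists>N. \<forall>n\<ge>N. (V(n+1) - V n) / (K(n+1) - K n)^k < e"
    proof (intro exI[of _ "int (max j0 k)"] allI impI)
      fix n :: int assume n: "int (max j0 k) \<le> n"
      define j where "j = nat n"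
      have n0: "n \<ge> 0" and jj: "j0 \<le> j" "k \<le> j" using n by (auto simp: j_def)
      have Kd: "K (n+1) - K n = Kp (Suc j) - Kp j" and Vd: "V (n+1) - V n = Vp (Suc j) - Vp j"
        using n0 nat1[OF n0] by (auto simp: K_def V_def j_def)
      have l: "Kp (Suc j) - Kp j > mm j"
      proof -
        have "Kp (Suc j) > w - (1/4)^(Suc j)" by (rule Kp(2))
        moreover have "Kp j < w - (1/4)^j/2" by (rule Kp(3))
        ultimately have "Kp (Suc j) - Kp j > (1/4)^j/2 - (1/4)^(Suc j)" by simp
        moreover have "(1/4::real)^j/2 - (1/4)^(Suc j) \<ge> mm j" by (simp add: mm_def)
        ultimately show ?thesis by simp
      qed
      have d: "Vp (Suc j) - Vp j < ee j" using Vp(2)[of j] Vp_z[of "Suc j"] by simp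
      have dpos: "Vp (Suc j) - Vp j > 0" using Vp_Suc[of j] by simp
      have "(Vp (Suc j) - Vp j) / (Kp (Suc j) - Kp j)^k \<le> (Vp (Suc j) - Vp j) / mm j ^ k"
        using l mm_pos dpos Kp_Suc[of j] by (intro divide_left_mono power_mono mult_pos_pos zero_less_power) (auto intro: less_imp_le)
      also have "\<dots> \<le> ee j / mm j ^ k" using d mm_pos[of j] by (intro divide_right_mono) auto
      also have "\<dots> \<le> (1/2)^j" by (rule ee_div[OF jj(2)])
      also have "\<dots> \<le> (1/2)^j0" using jj by (intro power_decreasing) auto
      also have "\<dots> < e" by (rule j0)
      finally show "(V(n+1) - V n) / (K(n+1) - K n)^k < e" using Kd Vd by simp
    qed
  qed
  show ?thesis using t_smooth t_strict t_bij t_w t_rel by blast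
qed

end
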